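(* For every integer $k\ge1$, every graphic matroid is elementarily $(3k^3,k)$-weakly base orderable.
   Context: The graphic (cycle) matroid of a graph $G$ has ground set $E(G)$ and its bases are the edge sets of maximal spanning forests (spanning trees if $G$ is connected). An ordered pair $(B_1,B_2)$ of bases has the elementary $k$-exchange property if there exist $k$-element subsets $X\subseteq B_1\setminus B_2$, $Y\subseteq B_2\setminus B_1$ and a bijection $\varphi\colon X\to Y$ such that $(B_1\setminus Z)\cup\varphi(Z)$ is a basis for every $Z\subseteq X$. A matroid is elementarily $(\alpha,k)$-weakly base orderable if every ordered pair $(B_1,B_2)$ of bases with $|B_1\setminus B_2|\ge\alpha$ has the elementary $k$-exchange property. *)

theory Defs
  imports Main
begin

text \<open>A finite multigraph (loops and parallel edges allowed) is given by a finite
edge set E and a map ends assigning to each edge its two (possibly equal) endpoints.\<close>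

definition connected_by :: "('e \<Rightarrow> 'v \<times> 'v) \<Rightarrow> 'e set \<Rightarrow> 'v \<Rightarrow> 'v \<Rightarrow> bool" where
  "connected_by ends F u v \<longleftrightarrow>
     (\<lambda>x y. \<exists>e\<in>F. ends e = (x, y) \<or> ends e = (y, x))\<^sup>*\<^sup>* u v"

text \<open>F is acyclic (a forest): no edge of F lies on a cycle of F, i.e. removing any
edge disconnects its endpoints (loops are excluded since they are cycles).\<close>
definition forest :: "('e \<Rightarrow> 'v \<times> 'v) \<Rightarrow> 'e set \<Rightarrow> bool" where
  "forest ends F \<longleftrightarrow>
     (\<forall>e\<in>F. \<not> connected_by ends (F - {e}) (fst (ends e)) (snd (ends e)))"

definition graphic_base :: "'e set \<Rightarrow> ('e \<Rightarrow> 'v \<times> 'v) \<Rightarrow> 'e set \<Rightarrow> bool" where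
  "graphic_base E ends B \<longleftrightarrow>
     B \<subseteq> E \<and> forest ends B \<and> (\<forall>e\<in>E - B. \<not> forest ends (insert e B))"

definition elementary_exchange ::
  "('e set \<Rightarrow> bool) \<Rightarrow> nat \<Rightarrow> 'e set \<Rightarrow> 'e set \<Rightarrow> bool" where
  "elementary_exchange is_base k B1 B2 \<longleftrightarrow>
     (\<exists>X Y \<phi>. X \<subseteq> B1 - B2 \<and> Y \<subseteq> B2 - B1 \<and> card X = k \<and> card Y = k \<and>
        finite X \<and> finite Y \<and> bij_betw \<phi> X Y \<and>
        (\<forall>Z\<subseteq>X. is_base ((B1 - Z) \<union> \<phi> ` Z)))"

definition elem_weakly_base_orderable ::
  "('e set \<Rightarrow> bool) \<Rightarrow> nat \<Rightarrow> nat \<Rightarrow> bool" where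
  "elem_weakly_base_orderable is_base \<alpha> k \<longleftrightarrow>
     (\<forall>B1 B2. is_base B1 \<longrightarrow> is_base B2 \<longrightarrow> card (B1 - B2) \<ge> \<alpha> \<longrightarrow>
        elementary_exchange is_base k B1 B2)"

end

theory Submission
  imports Defs
begin

fun tri :: "('e \<Rightarrow> 'x \<Rightarrow> bool) \<Rightarrow> ('x \<times> 'e) list \<Rightarrow> bool" where
  "tri R [] = True"
| "tri R ((x,y)#ps) = (R y x \<and> (\<forall>(x',y')\<in>set ps. \<not> R y x' \<and> x' \<noteq> x \<and> y' \<noteq> y) \<and> tri R ps)"

lemma tri_cong:
  "(\<forall>x\<in>fst ` set ps. \<forall>y\<in>snd ` set ps. R' y x = R y x) \<Longrightarrow> tri R ps = tri R' ps"
proof (induction ps)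
  case Nil then show ?case by simp
next
  case (Cons p ps)
  obtain x y where p: "p = (x,y)" by force
  have IH: "tri R ps = tri R' ps" using Cons by auto
  have "(\<forall>(x',y')\<in>set ps. \<not> R y x' \<and> x' \<noteq> x \<and> y' \<noteq> y) = (\<forall>(x',y')\<in>set ps. \<not> R' y x' \<and> x' \<noteq> x \<and> y' \<noteq> y)"
    using Cons.prems p by force
  moreover have "R y x = R' y x" using Cons.prems p by force
  ultimately show ?case using IH p by simp
qed

lemma tri_distinct: "tri R ps \<Longrightarrow> distinct (map fst ps) \<and> distinct (map snd ps)"
proof (induction ps)
  case Nil then show ?case by simp
next
  case (Cons p ps)
  obtain x y where p: "p = (x,y)" by force
  show ?case using Cons p by force
qed

lemma tri_take: "tri R ps \<Longrightarrow> tri R (take n ps)"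
proof (induction ps arbitrary: n)
  case Nil then show ?case by simp
next
  case (Cons p ps)
  obtain x y where p: "p = (x,y)" by force
  show ?case
  proof (cases n)
    case 0 then show ?thesis by simp
  next
    case (Suc m)
    have "set (take m ps) \<subseteq> set ps" by (rule set_take_subset)
    then show ?thesis using Cons p Suc by auto
  qed
qed

lemma tri_snoc: "tri R ps \<Longrightarrow> R y x \<Longrightarrow> (\<forall>(x',y')\<in>set ps. \<not> R y' x \<and> x' \<noteq> x \<and> y' \<noteq> y) \<Longrightarrow> tri R (ps @ [(x,y)])"
proof (induction ps)
  case Nil then show ?case by simp
next
  case (Cons p ps)
  obtain a b where p: "p = (a,b)" by force
  show ?case using Cons p by auto
qed

lemma mirsky_step:
  fixes S :: "'a::order set"
  assumes fS: "finite S" and C: "C \<subseteq> S - M" "card C = Suc d" "\<forall>a\<in>C. \<forall>b\<in>C. a \<le> b \<or> b \<le> a"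
    and M: "M = {a\<in>S. \<forall>b\<in>S. a \<le> b \<longrightarrow> a = b}"
  shows "\<exists>C'\<subseteq>S. card C' = Suc (Suc d) \<and> (\<forall>a\<in>C'. \<forall>b\<in>C'. a \<le> b \<or> b \<le> a)"
proof -
  have fC: "finite C" using C(1) fS finite_subset by blast
  have "C \<noteq> {}" using C(2) by auto
  then obtain m where m: "m \<in> C" "\<forall>b\<in>C. m \<le> b \<longrightarrow> m = b" using finite_has_maximal[OF fC] by blast
  have below: "b \<le> m" if "b \<in> C" for b using m C(3) that by blast
  have mS: "m \<in> S" "m \<notin> M" using m(1) C(1) by auto
  obtain y where y: "y \<in> S" "m \<le> y" "\<forall>b\<in>S. y \<le> b \<longrightarrow> y = b"
    using finite_has_maximal2[OF fS mS(1)] by blast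
  have yM: "y \<in> M" using y unfolding M by auto
  have yC: "y \<notin> C" using yM C(1) by auto
  have le: "z \<le> y" if "z \<in> C" for z using order_trans[OF below[OF that] y(2)] .
  have "insert y C \<subseteq> S" using C(1) y(1) by auto
  moreover have "card (insert y C) = Suc (Suc d)" using fC yC C(2) by simp
  moreover have "\<forall>a\<in>insert y C. \<forall>b\<in>insert y C. a \<le> b \<or> b \<le> a"
  proof (intro ballI)
    fix a b assume ab: "a \<in> insert y C" "b \<in> insert y C"
    show "a \<le> b \<or> b \<le> a"
    proof (cases "a = y")
      case True then show ?thesis using ab(2) le by auto
    next
      case False
      then have aC: "a \<in> C" using ab(1) by auto
      show ?thesis
      proof (cases "b = y")
        case True then show ?thesis using aC le by auto
      next
        case False then show ?thesis using aC ab(2) C(3) by auto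
      qed
    qed
  qed
  ultimately show ?thesis by blast
qed

lemma mirsky:
  fixes S :: "'a::order set"
  assumes "finite S" "card S \<ge> d * k + 1"
  shows "(\<exists>A\<subseteq>S. card A \<ge> k \<and> (\<forall>a\<in>A. \<forall>b\<in>A. a \<le> b \<longrightarrow> a = b)) \<or>
         (\<exists>C\<subseteq>S. card C = Suc d \<and> (\<forall>a\<in>C. \<forall>b\<in>C. a \<le> b \<or> b \<le> a))"
  using assms
proof (induction d arbitrary: S)
  case 0
  then have "S \<noteq> {}" by auto
  then obtain s where "s \<in> S" by blast
  then have "{s} \<subseteq> S \<and> card {s} = Suc 0 \<and> (\<forall>a\<in>{s}. \<forall>b\<in>{s}. a \<le> b \<or> b \<le> a)" by simp
  then show ?case by blast
next
  case (Suc d)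
  define M where "M = {a\<in>S. \<forall>b\<in>S. a \<le> b \<longrightarrow> a = b}"
  have MS: "M \<subseteq> S" unfolding M_def by auto
  have anti: "\<forall>a\<in>M. \<forall>b\<in>M. a \<le> b \<longrightarrow> a = b" unfolding M_def by auto
  show ?case
  proof (cases "card M \<ge> k")
    case True
    then have "M \<subseteq> S \<and> card M \<ge> k \<and> (\<forall>a\<in>M. \<forall>b\<in>M. a \<le> b \<longrightarrow> a = b)" using MS anti by simp
    then show ?thesis by blast
  next
    case False
    have fM: "finite M" using MS Suc.prems(1) finite_subset by blast
    have c1: "card (S - M) = card S - card M" using card_Diff_subset[OF fM MS] .
    have c2: "card S \<ge> d * k + k + 1" using Suc.prems(2) by (simp add: algebra_simps)
    have cS: "card (S - M) \<ge> d * k + 1" using c1 c2 False by linarith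
    have fSM: "finite (S - M)" using Suc.prems(1) by simp
    from Suc.IH[OF fSM cS] show ?thesis
    proof
      assume "\<exists>A\<subseteq>S - M. k \<le> card A \<and> (\<forall>a\<in>A. \<forall>b\<in>A. a \<le> b \<longrightarrow> a = b)"
      then obtain A where "A \<subseteq> S - M" "k \<le> card A" "\<forall>a\<in>A. \<forall>b\<in>A. a \<le> b \<longrightarrow> a = b" by blast
      then have "A \<subseteq> S \<and> k \<le> card A \<and> (\<forall>a\<in>A. \<forall>b\<in>A. a \<le> b \<longrightarrow> a = b)" by blast
      then show ?thesis by blast
    next
      assume "\<exists>C\<subseteq>S - M. card C = Suc d \<and> (\<forall>a\<in>C. \<forall>b\<in>C. a \<le> b \<or> b \<le> a)"
      then obtain C where "C \<subseteq> S - M" "card C = Suc d" "\<forall>a\<in>C. \<forall>b\<in>C. a \<le> b \<or> b \<le> a" by blast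
      from mirsky_step[OF Suc.prems(1) this M_def] show ?thesis by blast
    qed
  qed
qed


context
  fixes ends :: "'e \<Rightarrow> 'v \<times> 'v"
begin

lemma conn_refl[simp]: "connected_by ends F u u"
  by (simp add: connected_by_def)

lemma conn_trans: "connected_by ends F u v \<Longrightarrow> connected_by ends F v w \<Longrightarrow> connected_by ends F u w"
  unfolding connected_by_def by (rule rtranclp_trans)

lemma conn_sym: "connected_by ends F u v \<Longrightarrow> connected_by ends F v u"
  unfolding connected_by_def
proof (induction rule: rtranclp_induct)
  case base then show ?case by simp
next
  case (step y z)
  from step.hyps(2) have "\<exists>e\<in>F. ends e = (z, y) \<or> ends e = (y, z)" by blast
  then show ?case using step.IH by (rule converse_rtranclp_into_rtranclp[where r="\<lambda>x y. \<exists>e\<in>F. ends e = (x, y) \<or> ends e = (y, x)"])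
qed

lemma conn_edge: "e \<in> F \<Longrightarrow> connected_by ends F (fst (ends e)) (snd (ends e))"
  unfolding connected_by_def by (rule r_into_rtranclp) auto

lemma conn_mono: "F \<subseteq> G \<Longrightarrow> connected_by ends F u v \<Longrightarrow> connected_by ends G u v"
  unfolding connected_by_def
  by (erule rtranclp_mono[THEN predicate2D, rotated]) blast

lemma conn_split:
  assumes "connected_by ends (insert e F) u v"
  shows "connected_by ends F u v \<or>
    (connected_by ends F u (fst (ends e)) \<and> connected_by ends F (snd (ends e)) v) \<or>
    (connected_by ends F u (snd (ends e)) \<and> connected_by ends F (fst (ends e)) v)"
proof -
  have "(\<lambda>x y. \<exists>e'\<in>insert e F. ends e' = (x, y) \<or> ends e' = (y, x))\<^sup>*\<^sup>* u v"
    using assms by (simp add: connected_by_def)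
  then show ?thesis
  proof (induction rule: rtranclp_induct)
    case base show ?case by simp
  next
    case (step w v)
    from step.hyps(2) obtain g where g: "g \<in> insert e F" "ends g = (w,v) \<or> ends g = (v,w)" by blast
    show ?case
    proof (cases "g \<in> F")
      case True
      then have "connected_by ends F w v" using g(2) conn_edge[OF True] conn_sym by fastforce
      with step.IH show ?thesis using conn_trans by blast
    next
      case False
      then have "g = e" using g(1) by auto
      with g(2) have "(fst (ends e) = w \<and> snd (ends e) = v) \<or> (fst (ends e) = v \<and> snd (ends e) = w)" by auto
      then show ?thesis using step.IH by auto
    qed
  qed
qed

definition cross :: "'e \<Rightarrow> 'v set \<Rightarrow> bool" where
  "cross y U \<longleftrightarrow> ((fst (ends y) \<in> U) \<noteq> (snd (ends y) \<in> U))"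

definition ep :: "'e \<Rightarrow> 'v set" where
  "ep y = {fst (ends y), snd (ends y)}"

lemma cross_ep: "cross y U \<longleftrightarrow> (ep y \<inter> U \<noteq> {} \<and> \<not> ep y \<subseteq> U)"
  unfolding cross_def ep_def by auto

lemma cross_obtain: "cross y U \<Longrightarrow> \<exists>u w. ep y = {u,w} \<and> u \<in> U \<and> w \<notin> U"
  unfolding cross_def ep_def by auto

lemma conn_cross0:
  "connected_by ends F u v \<Longrightarrow> u \<in> U \<Longrightarrow> (\<exists>f\<in>F. cross f U) \<or> v \<in> U"
  unfolding connected_by_def
proof (induction rule: rtranclp_induct)
  case base then show ?case by simp
next
  case (step w v)
  from step.hyps(2) obtain g where g: "g \<in> F" "ends g = (w,v) \<or> ends g = (v,w)" by blast
  show ?case using step g unfolding cross_def by force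
qed

lemma conn_cross:
  "connected_by ends F u v \<Longrightarrow> u \<in> U \<Longrightarrow> v \<notin> U \<Longrightarrow> \<exists>f\<in>F. cross f U"
  using conn_cross0 by blast

lemma conn_cross_edge:
  assumes "connected_by ends F (fst (ends e)) (snd (ends e))" "cross e U"
  shows "\<exists>f\<in>F. cross f U"
proof (cases "fst (ends e) \<in> U")
  case True
  then show ?thesis using assms conn_cross unfolding cross_def by blast
next
  case False
  then show ?thesis using assms conn_cross conn_sym unfolding cross_def by blast
qed

lemma conn_insert_red:
  assumes "connected_by ends F (fst (ends e)) (snd (ends e))" "connected_by ends (insert e F) u v"
  shows "connected_by ends F u v"
  using conn_split[OF assms(2)] assms(1) conn_trans conn_sym by blast

definition cls :: "'e set \<Rightarrow> 'v \<Rightarrow> 'v set" where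
  "cls F v = {w. connected_by ends F v w}"

lemma cls_edge: "f \<in> F \<Longrightarrow> fst (ends f) \<in> cls F v \<longleftrightarrow> snd (ends f) \<in> cls F v"
  unfolding cls_def using conn_edge conn_trans conn_sym by blast

lemma cls_edge_cross: "f \<in> F \<Longrightarrow> \<not> cross f (cls F v)"
  using cls_edge unfolding cross_def by blast

lemma cls_eq: "connected_by ends F v w \<Longrightarrow> cls F v = cls F w"
  unfolding cls_def using conn_trans conn_sym by blast

lemma forest_mono: "forest ends F \<Longrightarrow> G \<subseteq> F \<Longrightarrow> forest ends G"
  unfolding forest_def by (meson Diff_mono conn_mono order_refl subsetD)

lemma forest_insert:
  assumes "forest ends F" "e \<notin> F" "\<not> connected_by ends F (fst (ends e)) (snd (ends e))"
  shows "forest ends (insert e F)"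
  unfolding forest_def
proof
  fix f assume f: "f \<in> insert e F"
  show "\<not> connected_by ends (insert e F - {f}) (fst (ends f)) (snd (ends f))"
  proof (cases "f = e")
    case True
    then have "insert e F - {f} = F" using assms(2) by auto
    then show ?thesis using True assms(3) by simp
  next
    case False
    then have fF: "f \<in> F" using f by auto
    have eq: "insert e F - {f} = insert e (F - {f})" using False by auto
    have nf: "\<not> connected_by ends (F - {f}) (fst (ends f)) (snd (ends f))"
      using assms(1) fF unfolding forest_def by blast
    show ?thesis
    proof
      assume c: "connected_by ends (insert e F - {f}) (fst (ends f)) (snd (ends f))"
      have sub: "F - {f} \<subseteq> F" by auto
      have fe: "connected_by ends F (fst (ends f)) (snd (ends f))" using conn_edge[OF fF] .
      from conn_split[OF c[unfolded eq]] nf show False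
      proof (elim disjE)
        assume "connected_by ends (F - {f}) (fst (ends f)) (fst (ends e)) \<and> connected_by ends (F - {f}) (snd (ends e)) (snd (ends f))"
        then have "connected_by ends F (fst (ends e)) (snd (ends e))"
          using conn_mono[OF sub] conn_trans conn_sym fe by meson
        then show False using assms(3) by simp
      next
        assume "connected_by ends (F - {f}) (fst (ends f)) (snd (ends e)) \<and> connected_by ends (F - {f}) (fst (ends e)) (snd (ends f))"
        then have "connected_by ends F (fst (ends e)) (snd (ends e))"
          using conn_mono[OF sub] conn_trans conn_sym fe by meson
        then show False using assms(3) by simp
      qed simp
    qed
  qed
qed

lemma base_conn:
  assumes "graphic_base E ends B" "e \<in> E"
  shows "connected_by ends B (fst (ends e)) (snd (ends e))"
proof (cases "e \<in> B")
  case True then show ?thesis by (rule conn_edge)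
next
  case False
  then have "\<not> forest ends (insert e B)" using assms unfolding graphic_base_def by blast
  then show ?thesis using forest_insert[of B e] assms False unfolding graphic_base_def by blast
qed

definition side :: "'e set \<Rightarrow> 'e \<Rightarrow> 'v set" where
  "side B x = cls (B - {x}) (fst (ends x))"

lemma other_side:
  assumes "x \<in> B" "connected_by ends B (fst (ends x)) v" "v \<notin> side B x"
  shows "connected_by ends (B - {x}) (snd (ends x)) v"
proof -
  have "insert x (B - {x}) = B" using assms(1) by auto
  then have c: "connected_by ends (insert x (B - {x})) (fst (ends x)) v" using assms(2) by simp
  show ?thesis using conn_split[OF c] assms(3) unfolding side_def cls_def
    using conn_trans conn_sym by blast
qed


lemma swap_base:
  assumes b: "graphic_base E ends B" and x: "x \<in> B" and y: "y \<in> E" "y \<notin> B"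
    and cr: "cross y (side B x)"
  shows "graphic_base E ends (insert y (B - {x}))"
proof -
  let ?B' = "insert y (B - {x})"
  have fB: "forest ends B" and BE: "B \<subseteq> E" using b unfolding graphic_base_def by auto
  have nc: "\<not> connected_by ends (B - {x}) (fst (ends y)) (snd (ends y))"
  proof
    assume c: "connected_by ends (B - {x}) (fst (ends y)) (snd (ends y))"
    from cr have "connected_by ends (B - {x}) (fst (ends x)) (fst (ends y)) \<noteq> connected_by ends (B - {x}) (fst (ends x)) (snd (ends y))"
      unfolding cross_def side_def cls_def by simp
    then show False using conn_trans[OF _ c] conn_trans[OF _ conn_sym[OF c]] by blast
  qed
  have fB': "forest ends ?B'"
    by (rule forest_insert[OF forest_mono[OF fB] _ nc]) (use y in auto)
  have yc: "connected_by ends B (fst (ends y)) (snd (ends y))" using base_conn[OF b y(1)] .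
  have sub: "B - {x} \<subseteq> ?B'" by auto
  have ye: "connected_by ends ?B' (fst (ends y)) (snd (ends y))" by (rule conn_edge) simp
  have xc: "connected_by ends ?B' (fst (ends x)) (snd (ends x))"
  proof (cases "fst (ends y) \<in> side B x")
    case True
    then have n2: "snd (ends y) \<notin> side B x" using cr unfolding cross_def by auto
    have c1: "connected_by ends (B - {x}) (fst (ends x)) (fst (ends y))" using True unfolding side_def cls_def by simp
    have "connected_by ends B (fst (ends x)) (snd (ends y))"
      using conn_trans[OF conn_mono[OF _ c1] yc] by auto
    then have c2: "connected_by ends (B - {x}) (snd (ends x)) (snd (ends y))" using other_side[OF x _ n2] by simp
    show ?thesis using conn_trans[OF conn_trans[OF conn_mono[OF sub c1] ye] conn_sym[OF conn_mono[OF sub c2]]] .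
  next
    case False
    then have n2: "snd (ends y) \<in> side B x" using cr unfolding cross_def by auto
    have c1: "connected_by ends (B - {x}) (fst (ends x)) (snd (ends y))" using n2 unfolding side_def cls_def by simp
    have "connected_by ends B (fst (ends x)) (fst (ends y))"
      using conn_trans[OF conn_mono[OF _ c1] conn_sym[OF yc]] by auto
    then have c2: "connected_by ends (B - {x}) (snd (ends x)) (fst (ends y))" using other_side[OF x _ False] by simp
    show ?thesis using conn_trans[OF conn_trans[OF conn_mono[OF sub c1] conn_sym[OF ye]] conn_sym[OF conn_mono[OF sub c2]]] .
  qed
  have all: "connected_by ends ?B' u v" if "connected_by ends B u v" for u v
  proof -
    have "B \<subseteq> insert x ?B'" by auto
    then have "connected_by ends (insert x ?B') u v" using conn_mono that by blast
    then show ?thesis using conn_insert_red[OF xc] by blast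
  qed
  have max: "\<not> forest ends (insert e ?B')" if e: "e \<in> E - ?B'" for e
  proof
    assume f: "forest ends (insert e ?B')"
    have "connected_by ends ?B' (fst (ends e)) (snd (ends e))" using all base_conn[OF b] e by blast
    moreover have "insert e ?B' - {e} = ?B'" using e by auto
    ultimately show False using f unfolding forest_def by auto
  qed
  show ?thesis unfolding graphic_base_def using fB' max BE y by auto
qed

lemma side_swap:
  assumes b: "graphic_base E ends B" and x0: "x0 \<in> B" and y: "y \<in> E" "y \<notin> B"
    and cr: "cross y (side B x0)" and x: "x \<in> B" "x \<noteq> x0" and ncr: "\<not> cross y (side B x)"
  shows "side (insert y (B - {x0})) x = side B x"
proof -
  let ?B' = "insert y (B - {x0})"
  have eq1: "?B' - {x} = insert y (B - {x} - {x0})" using y x by auto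
  have yc: "connected_by ends B (fst (ends y)) (snd (ends y))" using base_conn[OF b y(1)] .
  have y0c: "connected_by ends (B - {x}) (fst (ends y)) (snd (ends y))"
  proof -
    have "insert x (B - {x}) = B" using x by auto
    then have "connected_by ends (insert x (B - {x})) (fst (ends y)) (snd (ends y))" using yc by simp
    from conn_split[OF this] show ?thesis
    proof (elim disjE)
      assume a: "connected_by ends (B - {x}) (fst (ends y)) (fst (ends x)) \<and> connected_by ends (B - {x}) (snd (ends x)) (snd (ends y))"
      then have "fst (ends y) \<in> side B x" unfolding side_def cls_def using conn_sym[of "B - {x}" "fst (ends y)" "fst (ends x)"] by simp
      then have "snd (ends y) \<in> side B x" using ncr unfolding cross_def by blast
      then have "connected_by ends (B - {x}) (fst (ends x)) (snd (ends y))" unfolding side_def cls_def by simp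
      then show ?thesis using conn_trans[of "B - {x}" "fst (ends y)" "fst (ends x)"] a by blast
    next
      assume a: "connected_by ends (B - {x}) (fst (ends y)) (snd (ends x)) \<and> connected_by ends (B - {x}) (fst (ends x)) (snd (ends y))"
      then have "snd (ends y) \<in> side B x" unfolding side_def cls_def by simp
      then have "fst (ends y) \<in> side B x" using ncr unfolding cross_def by blast
      then have "connected_by ends (B - {x}) (fst (ends x)) (fst (ends y))" unfolding side_def cls_def by simp
      then show ?thesis using conn_trans[OF conn_sym[of "B - {x}" "fst (ends x)" "fst (ends y)"]] a by blast
    qed
  qed
  have ny0: "\<not> connected_by ends (B - {x0}) (fst (ends y)) (snd (ends y))"
  proof
    assume c: "connected_by ends (B - {x0}) (fst (ends y)) (snd (ends y))"
    from cr have "connected_by ends (B - {x0}) (fst (ends x0)) (fst (ends y)) \<noteq> connected_by ends (B - {x0}) (fst (ends x0)) (snd (ends y))"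
      unfolding cross_def side_def cls_def by simp
    then show False using conn_trans[OF _ c] conn_trans[OF _ conn_sym[OF c]] by blast
  qed
  have x0c: "connected_by ends (?B' - {x}) (fst (ends x0)) (snd (ends x0))"
  proof -
    have "insert x0 (B - {x} - {x0}) = B - {x}" using x0 x by auto
    then have c: "connected_by ends (insert x0 (B - {x} - {x0})) (fst (ends y)) (snd (ends y))" using y0c by simp
    have s1: "B - {x} - {x0} \<subseteq> B - {x0}" by auto
    have s2: "B - {x} - {x0} \<subseteq> ?B' - {x}" using eq1 by auto
    have ye: "connected_by ends (?B' - {x}) (fst (ends y)) (snd (ends y))" by (rule conn_edge) (use eq1 in auto)
    from conn_split[OF c] show ?thesis
    proof (elim disjE)
      assume "connected_by ends (B - {x} - {x0}) (fst (ends y)) (snd (ends y))"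
      then show ?thesis using conn_mono[OF s1] ny0 by blast
    next
      assume a: "connected_by ends (B - {x} - {x0}) (fst (ends y)) (fst (ends x0)) \<and> connected_by ends (B - {x} - {x0}) (snd (ends x0)) (snd (ends y))"
      then have a1: "connected_by ends (?B' - {x}) (fst (ends y)) (fst (ends x0))" and a2: "connected_by ends (?B' - {x}) (snd (ends x0)) (snd (ends y))"
        using conn_mono[OF s2] by auto
      show ?thesis using conn_trans[OF conn_trans[OF conn_sym[OF a1] ye] conn_sym[OF a2]] .
    next
      assume a: "connected_by ends (B - {x} - {x0}) (fst (ends y)) (snd (ends x0)) \<and> connected_by ends (B - {x} - {x0}) (fst (ends x0)) (snd (ends y))"
      then have a1: "connected_by ends (?B' - {x}) (fst (ends y)) (snd (ends x0))" and a2: "connected_by ends (?B' - {x}) (fst (ends x0)) (snd (ends y))"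
        using conn_mono[OF s2] by auto
      show ?thesis using conn_trans[OF conn_trans[OF a2 conn_sym[OF ye]] a1] .
    qed
  qed
  have "connected_by ends (?B' - {x}) u v = connected_by ends (B - {x}) u v" for u v
  proof
    assume "connected_by ends (?B' - {x}) u v"
    moreover have "?B' - {x} \<subseteq> insert y (B - {x})" using eq1 by auto
    ultimately have "connected_by ends (insert y (B - {x})) u v" using conn_mono by blast
    then show "connected_by ends (B - {x}) u v" using conn_insert_red[OF y0c] by blast
  next
    assume "connected_by ends (B - {x}) u v"
    moreover have "B - {x} \<subseteq> insert x0 (?B' - {x})" by auto
    ultimately have "connected_by ends (insert x0 (?B' - {x})) u v" using conn_mono by blast
    then show "connected_by ends (?B' - {x}) u v" using conn_insert_red[OF x0c] by blast
  qed
  then show ?thesis unfolding side_def cls_def by (intro Collect_cong)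
qed

lemma tri_swap:
  assumes "graphic_base E ends B" "tri (\<lambda>y x. cross y (side B x)) ps"
    "\<forall>(x,y)\<in>set ps. x \<in> B \<and> y \<in> E \<and> y \<notin> B \<and> \<phi> x = y"
    "Z \<subseteq> fst ` set ps"
  shows "graphic_base E ends ((B - Z) \<union> \<phi> ` Z)"
  using assms
proof (induction ps arbitrary: B Z)
  case Nil then show ?case by simp
next
  case (Cons p ps)
  obtain x y where p: "p = (x,y)" by force
  have Rx: "cross y (side B x)" and rest: "\<forall>(x',y')\<in>set ps. \<not> cross y (side B x') \<and> x' \<noteq> x \<and> y' \<noteq> y"
    and trps: "tri (\<lambda>y x. cross y (side B x)) ps" using Cons.prems(2) p by auto
  have mem: "x \<in> B" "y \<in> E" "y \<notin> B" "\<phi> x = y" using Cons.prems(3) p by auto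
  have memps: "\<forall>(x,y)\<in>set ps. x \<in> B \<and> y \<in> E \<and> y \<notin> B \<and> \<phi> x = y" using Cons.prems(3) by auto
  show ?case
  proof (cases "x \<in> Z")
    case False
    then have "Z \<subseteq> fst ` set ps" using Cons.prems(4) p by auto
    then show ?thesis using Cons.IH[OF Cons.prems(1) trps memps] by blast
  next
    case True
    let ?B' = "insert y (B - {x})"
    have b': "graphic_base E ends ?B'" using swap_base[OF Cons.prems(1) mem(1-3) Rx] .
    have sides: "side ?B' x' = side B x'" if "x' \<in> fst ` set ps" for x'
    proof -
      from that obtain y' where "(x', y') \<in> set ps" by (auto simp: image_iff)
      then have "x' \<in> B" "x' \<noteq> x" "\<not> cross y (side B x')" using rest memps by auto
      then show ?thesis using side_swap[OF Cons.prems(1) mem(1-3) Rx] by blast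
    qed
    have tr': "tri (\<lambda>y x. cross y (side ?B' x)) ps"
      using trps tri_cong[of ps "\<lambda>y x. cross y (side B x)" "\<lambda>y x. cross y (side ?B' x)"] sides by auto
    have mem': "\<forall>(x',y')\<in>set ps. x' \<in> ?B' \<and> y' \<in> E \<and> y' \<notin> ?B' \<and> \<phi> x' = y'" using memps rest by auto
    have Z': "Z - {x} \<subseteq> fst ` set ps" using Cons.prems(4) p by auto
    have IH: "graphic_base E ends ((?B' - (Z - {x})) \<union> \<phi> ` (Z - {x}))"
      using Cons.IH[OF b' tr' mem' Z'] .
    have "fst ` set (p # ps) \<subseteq> B" using Cons.prems(3) by auto
    then have Zsub: "Z \<subseteq> B" using Cons.prems(4) by blast
    have "(?B' - (Z - {x})) \<union> \<phi> ` (Z - {x}) = (B - Z) \<union> \<phi> ` Z"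
    proof -
      have "\<phi> ` Z = insert y (\<phi> ` (Z - {x}))" using True mem(4) by auto
      moreover have "y \<notin> Z" using Zsub mem(3) by auto
      ultimately show ?thesis using True by auto
    qed
    then show ?thesis using IH by simp
  qed
qed








lemma cls2:
  assumes "forest ends B" "x \<in> B"
  shows "v \<in> cls (B - {x}) (snd (ends x)) \<longleftrightarrow>
    connected_by ends B (fst (ends x)) v \<and> v \<notin> cls (B - {x}) (fst (ends x))"
proof
  assume a: "v \<in> cls (B - {x}) (snd (ends x))"
  then have c: "connected_by ends (B - {x}) (snd (ends x)) v" unfolding cls_def by simp
  have "connected_by ends B (fst (ends x)) v"
    using conn_trans[OF conn_edge[OF assms(2)] conn_mono[OF Diff_subset c]] .
  moreover have "v \<notin> cls (B - {x}) (fst (ends x))"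
  proof
    assume "v \<in> cls (B - {x}) (fst (ends x))"
    then have "connected_by ends (B - {x}) (fst (ends x)) v" unfolding cls_def by simp
    then have "connected_by ends (B - {x}) (fst (ends x)) (snd (ends x))" using conn_trans[OF _ conn_sym[OF c]] by blast
    then show False using assms unfolding forest_def by blast
  qed
  ultimately show "connected_by ends B (fst (ends x)) v \<and> v \<notin> cls (B - {x}) (fst (ends x))" by blast
next
  assume a: "connected_by ends B (fst (ends x)) v \<and> v \<notin> cls (B - {x}) (fst (ends x))"
  then have "v \<notin> side B x" unfolding side_def by simp
  from other_side[OF assms(2) conjunct1[OF a] this]
  show "v \<in> cls (B - {x}) (snd (ends x))" unfolding cls_def by simp
qed

context
  fixes E :: "'e set" and B1 B2 :: "'e set"
  assumes finE: "finite E" and b1: "graphic_base E ends B1" and b2: "graphic_base E ends B2"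
begin

definition rho :: "'v \<Rightarrow> 'v" where "rho v = (SOME w. w \<in> cls B1 v)"

definition near :: "'e \<Rightarrow> 'v" where
  "near x = (if rho (fst (ends x)) \<in> cls (B1 - {x}) (fst (ends x)) then fst (ends x) else snd (ends x))"

definition far :: "'e \<Rightarrow> 'v" where
  "far x = (if rho (fst (ends x)) \<in> cls (B1 - {x}) (fst (ends x)) then snd (ends x) else fst (ends x))"

definition T :: "'e \<Rightarrow> 'v set" where
  "T x = cls (B1 - {x}) (far x)"

lemma fB1: "forest ends B1" and B1E: "B1 \<subseteq> E" and B2E: "B2 \<subseteq> E"
  using b1 b2 unfolding graphic_base_def by auto

lemma rho_in: "rho v \<in> cls B1 v"
  unfolding rho_def by (rule someI[of _ v]) (simp add: cls_def)

lemma rho_eq: "connected_by ends B1 v w \<Longrightarrow> rho v = rho w"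
  unfolding rho_def using cls_eq[of B1 v w] by simp

lemma no_loop: "x \<in> B1 \<Longrightarrow> \<not> connected_by ends (B1 - {x}) (fst (ends x)) (snd (ends x))"
  using fB1 unfolding forest_def by blast

lemma near_far: "(near x = fst (ends x) \<and> far x = snd (ends x)) \<or> (near x = snd (ends x) \<and> far x = fst (ends x))"
  unfolding near_def far_def by auto

lemma ep_nf: "ep x = {near x, far x}"
  using near_far[of x] unfolding ep_def by auto

lemma nf_disc: "x \<in> B1 \<Longrightarrow> \<not> connected_by ends (B1 - {x}) (near x) (far x)"
  using near_far[of x] no_loop[of x] conn_sym[of "B1 - {x}" "snd (ends x)" "fst (ends x)"] by auto

lemma far_in: "x \<in> B1 \<Longrightarrow> far x \<in> T x"
  unfolding T_def cls_def by simp

lemma near_notin: "x \<in> B1 \<Longrightarrow> near x \<notin> T x"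
  unfolding T_def cls_def using nf_disc conn_sym[of "B1 - {x}" "far x" "near x"] by auto

lemma cross_T: "x \<in> B1 \<Longrightarrow> cross x (T x)"
  unfolding cross_ep ep_nf using far_in near_notin by blast

lemma T_only: "f \<in> B1 \<Longrightarrow> cross f (T x) \<Longrightarrow> f = x"
proof (rule ccontr)
  assume "f \<in> B1" "cross f (T x)" "f \<noteq> x"
  then have "f \<in> B1 - {x}" by auto
  then show False using cls_edge_cross[of f "B1 - {x}" "far x"] \<open>cross f (T x)\<close>
    unfolding T_def by blast
qed

lemma near_rho:
  assumes x: "x \<in> B1"
  shows "connected_by ends (B1 - {x}) (near x) (rho (fst (ends x)))"
proof (cases "rho (fst (ends x)) \<in> cls (B1 - {x}) (fst (ends x))")
  case True
  then show ?thesis unfolding near_def cls_def by simp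
next
  case False
  have c: "connected_by ends B1 (fst (ends x)) (rho (fst (ends x)))" using rho_in unfolding cls_def by simp
  have ns: "rho (fst (ends x)) \<notin> side B1 x" using False unfolding side_def .
  have "connected_by ends (B1 - {x}) (snd (ends x)) (rho (fst (ends x)))"
    using other_side[OF x c ns] .
  then show ?thesis using False unfolding near_def by simp
qed

lemma rho_notin: "x \<in> B1 \<Longrightarrow> rho (fst (ends x)) \<notin> T x"
proof
  assume x: "x \<in> B1" and r: "rho (fst (ends x)) \<in> T x"
  then have fr: "connected_by ends (B1 - {x}) (far x) (rho (fst (ends x)))" unfolding T_def cls_def by simp
  have "connected_by ends (B1 - {x}) (near x) (far x)"
    using conn_trans[OF near_rho[OF x] conn_sym[OF fr]] .
  then show False using nf_disc x by blast
qed

lemma T_comp: "x \<in> B1 \<Longrightarrow> w \<in> T x \<Longrightarrow> connected_by ends B1 (fst (ends x)) w"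
proof -
  assume x: "x \<in> B1" and w: "w \<in> T x"
  have "connected_by ends (B1 - {x}) (far x) w" using w unfolding T_def cls_def by simp
  then have c: "connected_by ends B1 (far x) w" by (rule conn_mono[OF Diff_subset[of B1 "{x}"]])
  have "connected_by ends B1 (fst (ends x)) (far x)"
    using near_far[of x] conn_edge[OF x] by auto
  then show ?thesis using conn_trans[OF _ c] by blast
qed

lemma lam_aux:
  assumes x: "x \<in> B1" and x': "x' \<in> B1" and ne: "x \<noteq> x'" and out: "fst (ends x') \<notin> T x"
  shows "T x \<subseteq> T x' \<or> T x \<inter> T x' = {}"
proof -
  have x'B: "x' \<in> B1 - {x}" using x' ne by auto
  have out2: "snd (ends x') \<notin> T x" using out cls_edge[OF x'B] unfolding T_def by blast
  have sub: "B1 - {x} - {x'} \<subseteq> B1 - {x}" "B1 - {x} - {x'} \<subseteq> B1 - {x'}" by auto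
  have A: "connected_by ends (B1 - {x'}) (far x) w" if w: "w \<in> T x" for w
  proof -
    have "insert x' (B1 - {x} - {x'}) = B1 - {x}" using x'B by auto
    then have c: "connected_by ends (insert x' (B1 - {x} - {x'})) (far x) w" using w unfolding T_def cls_def by simp
    from conn_split[OF c] show ?thesis
    proof (elim disjE)
      assume "connected_by ends (B1 - {x} - {x'}) (far x) w"
      then show ?thesis using conn_mono[OF sub(2)] by blast
    next
      assume "connected_by ends (B1 - {x} - {x'}) (far x) (fst (ends x')) \<and> connected_by ends (B1 - {x} - {x'}) (snd (ends x')) w"
      then have "fst (ends x') \<in> T x" using conn_mono[OF sub(1)] unfolding T_def cls_def by blast
      then show ?thesis using out by blast
    next
      assume "connected_by ends (B1 - {x} - {x'}) (far x) (snd (ends x')) \<and> connected_by ends (B1 - {x} - {x'}) (fst (ends x')) w"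
      then have "snd (ends x') \<in> T x" using conn_mono[OF sub(1)] unfolding T_def cls_def by blast
      then show ?thesis using out2 by blast
    qed
  qed
  show ?thesis
  proof (cases "far x \<in> T x'")
    case True
    then have "connected_by ends (B1 - {x'}) (far x') (far x)" unfolding T_def cls_def by simp
    have "T x \<subseteq> T x'"
    proof
      fix w assume "w \<in> T x"
      from conn_trans[OF \<open>connected_by ends (B1 - {x'}) (far x') (far x)\<close> A[OF this]]
      show "w \<in> T x'" unfolding T_def cls_def by simp
    qed
    then show ?thesis by blast
  next
    case False
    have "T x \<inter> T x' = {}"
    proof (rule ccontr)
      assume "T x \<inter> T x' \<noteq> {}"
      then obtain w where w: "w \<in> T x" "w \<in> T x'" by blast
      have "connected_by ends (B1 - {x'}) (far x') w" using w(2) unfolding T_def cls_def by simp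
      moreover have "connected_by ends (B1 - {x'}) (far x) w" using A w(1) by blast
      ultimately have "connected_by ends (B1 - {x'}) (far x') (far x)" using conn_trans[OF _ conn_sym] by blast
      then show False using False unfolding T_def cls_def by simp
    qed
    then show ?thesis by blast
  qed
qed

lemma lam_contra:
  assumes x: "x \<in> B1" and x': "x' \<in> B1" and ne: "x \<noteq> x'"
    and i1: "fst (ends x') \<in> T x" and i2: "fst (ends x) \<in> T x'"
  shows False
proof -
  define r where "r = rho (fst (ends x))"
  have "connected_by ends B1 (fst (ends x)) (fst (ends x'))" using T_comp[OF x i1] .
  then have rr: "rho (fst (ends x')) = r" unfolding r_def using rho_eq by simp
  have xB: "x \<in> B1 - {x'}" using x ne by auto
  have x'B: "x' \<in> B1 - {x}" using x' ne by auto
  have i2': "snd (ends x) \<in> T x'" using i2 cls_edge[OF xB] unfolding T_def by blast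
  have i1': "snd (ends x') \<in> T x" using i1 cls_edge[OF x'B] unfolding T_def by blast
  have nT: "near x \<in> T x'" using near_far[of x] i2 i2' by auto
  have rn: "r \<notin> T x'" using rho_notin[OF x'] rr by simp
  have nr: "connected_by ends (B1 - {x}) (near x) r" using near_rho[OF x] unfolding r_def .
  have sub: "B1 - {x} - {x'} \<subseteq> B1 - {x}" "B1 - {x} - {x'} \<subseteq> B1 - {x'}" by auto
  have "insert x' (B1 - {x} - {x'}) = B1 - {x}" using x'B by auto
  then have c: "connected_by ends (insert x' (B1 - {x} - {x'})) (near x) r" using nr by simp
  have bad: "connected_by ends (B1 - {x}) (near x) v \<Longrightarrow> v \<in> T x \<Longrightarrow> False" for v
  proof -
    assume a: "connected_by ends (B1 - {x}) (near x) v" and v: "v \<in> T x"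
    have fv: "connected_by ends (B1 - {x}) (far x) v" using v unfolding T_def cls_def by simp
    have "connected_by ends (B1 - {x}) (near x) (far x)" using conn_trans[OF a conn_sym[OF fv]] .
    then show False using nf_disc x by blast
  qed
  from conn_split[OF c] show False
  proof (elim disjE)
    assume "connected_by ends (B1 - {x} - {x'}) (near x) r"
    then have "connected_by ends (B1 - {x'}) (near x) r" using conn_mono[OF sub(2)] by blast
    moreover have "connected_by ends (B1 - {x'}) (far x') (near x)" using nT unfolding T_def cls_def by simp
    ultimately have "connected_by ends (B1 - {x'}) (far x') r" using conn_trans by blast
    then have "r \<in> T x'" unfolding T_def cls_def by simp
    then show False using rn by blast
  next
    assume "connected_by ends (B1 - {x} - {x'}) (near x) (fst (ends x')) \<and> connected_by ends (B1 - {x} - {x'}) (snd (ends x')) r"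
    then have "connected_by ends (B1 - {x}) (near x) (fst (ends x'))" using conn_mono[OF sub(1)] by blast
    then show False using bad i1 by blast
  next
    assume "connected_by ends (B1 - {x} - {x'}) (near x) (snd (ends x')) \<and> connected_by ends (B1 - {x} - {x'}) (fst (ends x')) r"
    then have "connected_by ends (B1 - {x}) (near x) (snd (ends x'))" using conn_mono[OF sub(1)] by blast
    then show False using bad i1' by blast
  qed
qed

lemma laminar:
  assumes "x \<in> B1" "x' \<in> B1" "x \<noteq> x'"
  shows "T x \<subseteq> T x' \<or> T x' \<subseteq> T x \<or> T x \<inter> T x' = {}"
proof (cases "fst (ends x') \<in> T x")
  case True
  then have "fst (ends x) \<notin> T x'" using lam_contra assms by blast
  then have "T x' \<subseteq> T x \<or> T x' \<inter> T x = {}" using lam_aux[of x' x] assms by blast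
  then show ?thesis by blast
next
  case False
  then show ?thesis using lam_aux assms by blast
qed

lemma T_inj: "x \<in> B1 \<Longrightarrow> x' \<in> B1 \<Longrightarrow> T x = T x' \<Longrightarrow> x = x'"
proof -
  assume x: "x \<in> B1" and x': "x' \<in> B1" and eq: "T x = T x'"
  have "cross x' (T x)" using cross_T[OF x'] eq by simp
  from T_only[OF x' this] show "x = x'" by simp
qed

lemma cross_T_side:
  assumes y: "y \<in> E" and x: "x \<in> B1"
  shows "cross y (T x) = cross y (side B1 x)"
proof (cases "far x = fst (ends x)")
  case True
  then show ?thesis unfolding T_def side_def by simp
next
  case False
  then have fx: "far x = snd (ends x)" using near_far[of x] by auto
  define S where "S = cls (B1 - {x}) (fst (ends x))"
  define P where "P v = connected_by ends B1 (fst (ends x)) v" for v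
  have Tm: "v \<in> T x \<longleftrightarrow> P v \<and> v \<notin> S" for v
    unfolding T_def fx S_def P_def using cls2[OF fB1 x] by blast
  have Sm: "v \<in> S \<Longrightarrow> P v" for v
    unfolding S_def P_def cls_def using conn_mono[OF Diff_subset[of B1 "{x}"], of "fst (ends x)" v] by simp
  have yc: "connected_by ends B1 (fst (ends y)) (snd (ends y))" using base_conn[OF b1 y] .
  have "P (fst (ends y)) = P (snd (ends y))" unfolding P_def using conn_trans[OF _ yc] conn_trans[OF _ conn_sym[OF yc]] by blast
  then show ?thesis unfolding cross_def side_def S_def[symmetric] using Tm Sm by blast
qed

lemma not_B1:
  assumes "f \<in> B2" "x \<in> B1 - B2" "cross f (T x)"
  shows "f \<notin> B1"
  using T_only assms by blast


lemma anti_list: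
  assumes "finite A" "A \<subseteq> B1 - B2" "\<forall>x\<in>A. \<forall>x'\<in>A. x \<noteq> x' \<longrightarrow> T x \<inter> T x' = {}"
  shows "\<exists>ps. tri (\<lambda>y x. cross y (T x)) ps \<and> length ps = card A \<and>
    (\<forall>(x,y)\<in>set ps. x \<in> A \<and> y \<in> B2 - B1 \<and> ep y \<inter> \<Union>(T ` A) \<noteq> {})"
  using assms
proof (induction "card A" arbitrary: A)
  case 0
  then have "A = {}" by simp
  then show ?case by (intro exI[of _ "[]"]) simp
next
  case (Suc n A)
  then have "A \<noteq> {}" by auto
  then obtain x0 where x0: "x0 \<in> A" by blast
  define U where "U = \<Union>(T ` A)"
  have x0B: "x0 \<in> B1" using x0 Suc.prems(2) by auto
  have farU: "far x0 \<in> U" unfolding U_def using far_in[OF x0B] x0 by blast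
  have nearU: "near x0 \<notin> U"
  proof
    assume "near x0 \<in> U"
    then obtain a where a: "a \<in> A" "near x0 \<in> T a" unfolding U_def by blast
    have "a \<noteq> x0" using a near_notin[OF x0B] by blast
    then have "far x0 \<notin> T a" using Suc.prems(3) a(1) x0 far_in[OF x0B] by blast
    then have "cross x0 (T a)" unfolding cross_ep ep_nf using a(2) by blast
    then have "x0 = a" using T_only[OF x0B] by blast
    then show False using \<open>a \<noteq> x0\<close> by simp
  qed
  have cx0: "cross x0 U" unfolding cross_ep ep_nf using farU nearU by blast
  have "connected_by ends B2 (fst (ends x0)) (snd (ends x0))"
    using base_conn[OF b2] x0B B1E by blast
  from conn_cross_edge[OF this cx0] obtain f where f: "f \<in> B2" "cross f U" by blast
  from cross_obtain[OF f(2)] obtain u w where uw: "ep f = {u,w}" "u \<in> U" "w \<notin> U" by blast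
  from uw(2) obtain a where a: "a \<in> A" "u \<in> T a" unfolding U_def by blast
  have aB: "a \<in> B1 - B2" using a Suc.prems(2) by auto
  have wa: "w \<notin> T a" using uw(3) a(1) unfolding U_def by blast
  have cfa: "cross f (T a)" unfolding cross_ep uw(1) using a(2) wa by blast
  have fB1: "f \<notin> B1" using not_B1[OF f(1) aB cfa] .
  have cardA: "n = card (A - {a})" using Suc.hyps(2) a(1) Suc.prems(1) by simp
  have "\<exists>ps. tri (\<lambda>y x. cross y (T x)) ps \<and> length ps = card (A - {a}) \<and>
    (\<forall>(x,y)\<in>set ps. x \<in> A - {a} \<and> y \<in> B2 - B1 \<and> ep y \<inter> \<Union>(T ` (A - {a})) \<noteq> {})"
    by (rule Suc.hyps(1)[OF cardA]) (use Suc.prems in auto)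
  then obtain ps where ps: "tri (\<lambda>y x. cross y (T x)) ps" "length ps = card (A - {a})"
    "\<forall>(x,y)\<in>set ps. x \<in> A - {a} \<and> y \<in> B2 - B1 \<and> ep y \<inter> \<Union>(T ` (A - {a})) \<noteq> {}" by blast
  have disj: "ep f \<inter> T x' = {}" if "x' \<in> A - {a}" for x'
  proof -
    have "u \<notin> T x'" using a Suc.prems(3) that by blast
    moreover have "w \<notin> T x'" using uw(3) that unfolding U_def by blast
    ultimately show ?thesis using uw(1) by auto
  qed
  have disj2: "ep f \<inter> \<Union>(T ` (A - {a})) = {}" using disj by blast
  have tr: "tri (\<lambda>y x. cross y (T x)) ((a,f) # ps)"
  proof -
    have "\<forall>(x',y')\<in>set ps. \<not> (\<lambda>y x. cross y (T x)) f x' \<and> x' \<noteq> a \<and> y' \<noteq> f"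
    proof (intro ballI, clarify)
      fix x' y' assume xy: "(x', y') \<in> set ps"
      then have xA: "x' \<in> A - {a}" and ey: "ep y' \<inter> \<Union>(T ` (A - {a})) \<noteq> {}" using ps(3) by auto
      have "\<not> (\<lambda>y x. cross y (T x)) f x'" unfolding cross_ep using disj[OF xA] by blast
      moreover have "y' \<noteq> f" using ey disj2 by blast
      ultimately show "\<not> (\<lambda>y x. cross y (T x)) f x' \<and> x' \<noteq> a \<and> y' \<noteq> f" using xA by blast
    qed
    then show ?thesis using cfa ps(1) by simp
  qed
  have len: "length ((a,f) # ps) = card A"
    using ps(2) Suc.hyps(2) cardA by simp
  have mem: "\<forall>(x,y)\<in>set ((a,f) # ps). x \<in> A \<and> y \<in> B2 - B1 \<and> ep y \<inter> \<Union>(T ` A) \<noteq> {}"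
  proof -
    have "ep f \<inter> \<Union>(T ` A) \<noteq> {}" using uw(1,2) unfolding U_def by blast
    moreover have "\<forall>(x,y)\<in>set ps. x \<in> A \<and> y \<in> B2 - B1 \<and> ep y \<inter> \<Union>(T ` A) \<noteq> {}"
      using ps(3) by fastforce
    ultimately show ?thesis using a(1) f(1) fB1 by simp
  qed
  show ?case using tr len mem by blast
qed



lemma chain_list:
  assumes "finite C" "C \<subseteq> B1 - B2" "\<forall>x\<in>C. \<forall>x'\<in>C. T x \<subseteq> T x' \<or> T x' \<subseteq> T x" "m \<in> C" "\<forall>c\<in>C. T c \<subseteq> T m"
  shows "\<exists>dl ul. tri (\<lambda>y x. cross y (T x)) dl \<and> tri (\<lambda>y x. cross y (T x)) ul \<and> card C \<le> length dl + length ul + 1 \<and>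
    (\<forall>(x,y)\<in>set dl. x \<in> C \<and> y \<in> B2 - B1 \<and> ep y \<inter> T m \<noteq> {}) \<and>
    (\<forall>(x,y)\<in>set ul. x \<in> C - {m} \<and> y \<in> B2 - B1 \<and> ep y \<subseteq> T m)"
  using assms
proof (induction "card C" arbitrary: C m)
  case 0
  then show ?case by auto
next
  case (Suc n C m)
  define C' where "C' = C - {m}"
  show ?case
  proof (cases "C' = {}")
    case True
    then have "C = {m}" using Suc.prems(4) unfolding C'_def by auto
    then show ?thesis by (intro exI[of _ "[]"]) simp
  next
    case False
    have fC': "finite C'" using Suc.prems(1) unfolding C'_def by simp
    have fT: "finite (T ` C')" using fC' by simp
    have "T ` C' \<noteq> {}" using False by simp
    from finite_has_maximal[OF fT this] obtain M where M: "M \<in> T ` C'" "\<forall>b\<in>T ` C'. M \<le> b \<longrightarrow> M = b" by blast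
    then obtain m' where m': "m' \<in> C'" "M = T m'" by blast
    have m'C: "m' \<in> C" "m' \<noteq> m" using m'(1) unfolding C'_def by auto
    have top': "\<forall>c\<in>C'. T c \<subseteq> T m'"
    proof
      fix c assume c: "c \<in> C'"
      then have "c \<in> C" unfolding C'_def by simp
      then have "T c \<subseteq> T m' \<or> T m' \<subseteq> T c" using Suc.prems(3) m'C(1) by blast
      then show "T c \<subseteq> T m'" using M(2) m'(2) c by blast
    qed
    have mB: "m \<in> B1 - B2" and m'B: "m' \<in> B1 - B2" using Suc.prems(2,4) m'C by auto
    have sub: "T m' \<subseteq> T m" using Suc.prems(5) m'C by blast
    have cardC': "n = card C'" using Suc.hyps(2) Suc.prems(1,4) unfolding C'_def by simp
    have "\<exists>dl ul. tri (\<lambda>y x. cross y (T x)) dl \<and> tri (\<lambda>y x. cross y (T x)) ul \<and> card C' \<le> length dl + length ul + 1 \<and>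
      (\<forall>(x,y)\<in>set dl. x \<in> C' \<and> y \<in> B2 - B1 \<and> ep y \<inter> T m' \<noteq> {}) \<and>
      (\<forall>(x,y)\<in>set ul. x \<in> C' - {m'} \<and> y \<in> B2 - B1 \<and> ep y \<subseteq> T m')"
      by (rule Suc.hyps(1)[OF cardC']) (use Suc.prems m' top' in \<open>auto simp: C'_def\<close>)
    then obtain dl ul where dl: "tri (\<lambda>y x. cross y (T x)) dl" and ul: "tri (\<lambda>y x. cross y (T x)) ul"
      and len: "card C' \<le> length dl + length ul + 1"
      and dlm: "\<forall>(x,y)\<in>set dl. x \<in> C' \<and> y \<in> B2 - B1 \<and> ep y \<inter> T m' \<noteq> {}"
      and ulm: "\<forall>(x,y)\<in>set ul. x \<in> C' - {m'} \<and> y \<in> B2 - B1 \<and> ep y \<subseteq> T m'" by blast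
    have cardC: "card C = Suc (card C')" using Suc.hyps(2) cardC' by simp
    define D where "D = T m - T m'"
    have mB1: "m \<in> B1" using mB by simp
    have farD: "far m \<notin> T m'"
    proof
      assume a: "far m \<in> T m'"
      have "near m \<notin> T m'" using near_notin[OF mB1] sub by blast
      then have "cross m (T m')" unfolding cross_ep ep_nf using a by blast
      then have "m = m'" using T_only[OF mB1] by blast
      then show False using m'C by simp
    qed
    have cm: "cross m D" unfolding cross_ep ep_nf D_def using far_in[OF mB1] farD near_notin[OF mB1] by blast
    have "connected_by ends B2 (fst (ends m)) (snd (ends m))" using base_conn[OF b2] mB1 B1E by blast
    from conn_cross_edge[OF this cm] obtain f where f: "f \<in> B2" "cross f D" by blast
    from cross_obtain[OF f(2)] obtain u w where uw: "ep f = {u,w}" "u \<in> D" "w \<notin> D" by blast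
    have fB1: "f \<notin> B1"
    proof
      assume fB: "f \<in> B1"
      show False
      proof (cases "w \<in> T m")
        case True
        then have "w \<in> T m'" using uw(3) unfolding D_def by blast
        then have "cross f (T m')" unfolding cross_ep uw(1) using uw(2) unfolding D_def by blast
        then have "f = m'" using T_only[OF fB] by blast
        then show False using m'B f(1) by simp
      next
        case False
        then have "cross f (T m)" unfolding cross_ep uw(1) using uw(2) unfolding D_def by blast
        then have "f = m" using T_only[OF fB] by blast
        then show False using mB f(1) by simp
      qed
    qed
    show ?thesis
    proof (cases "w \<in> T m")
      case True
      then have wm': "w \<in> T m'" using uw(3) unfolding D_def by blast
      have um': "u \<notin> T m'" using uw(2) unfolding D_def by blast
      have Rf: "cross f (T m')" unfolding cross_ep uw(1) using wm' um' by blast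
      have "\<forall>(x',y')\<in>set ul. \<not> cross y' (T m') \<and> x' \<noteq> m' \<and> y' \<noteq> f"
      proof (intro ballI, clarify)
        fix x' y' assume "(x', y') \<in> set ul"
        then have a: "x' \<in> C' - {m'}" "ep y' \<subseteq> T m'" using ulm by auto
        have "\<not> cross y' (T m')" unfolding cross_ep using a(2) by blast
        moreover have "y' \<noteq> f" using a(2) um' uw(1) by auto
        ultimately show "\<not> cross y' (T m') \<and> x' \<noteq> m' \<and> y' \<noteq> f" using a(1) by blast
      qed
      then have ul': "tri (\<lambda>y x. cross y (T x)) (ul @ [(m', f)])" using tri_snoc[OF ul] Rf by blast
      have len': "card C \<le> length dl + length (ul @ [(m', f)]) + 1" using len cardC by simp
      have dlm': "\<forall>(x,y)\<in>set dl. x \<in> C \<and> y \<in> B2 - B1 \<and> ep y \<inter> T m \<noteq> {}"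
        using dlm sub unfolding C'_def by blast
      have "ep f \<subseteq> T m" using uw(2) True unfolding uw(1) D_def by blast
      have ulm': "\<forall>(x,y)\<in>set (ul @ [(m', f)]). x \<in> C - {m} \<and> y \<in> B2 - B1 \<and> ep y \<subseteq> T m"
      proof -
        have "\<forall>(x,y)\<in>set ul. x \<in> C - {m} \<and> y \<in> B2 - B1 \<and> ep y \<subseteq> T m" using ulm sub unfolding C'_def by blast
        moreover have "m' \<in> C - {m} \<and> f \<in> B2 - B1 \<and> ep f \<subseteq> T m" using \<open>ep f \<subseteq> T m\<close> m'C f(1) fB1 by blast
        ultimately show ?thesis by simp
      qed
      show ?thesis using dl ul' len' dlm' ulm' by blast
    next
      case False
      have um': "u \<notin> T m'" using uw(2) unfolding D_def by blast
      have disj: "ep f \<inter> T m' = {}" using um' False sub unfolding uw(1) by blast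
      have Rf: "cross f (T m)" unfolding cross_ep uw(1) using uw(2) False unfolding D_def by blast
      have "\<forall>(x',y')\<in>set dl. \<not> cross f (T x') \<and> x' \<noteq> m \<and> y' \<noteq> f"
      proof (intro ballI, clarify)
        fix x' y' assume "(x', y') \<in> set dl"
        then have a: "x' \<in> C'" "ep y' \<inter> T m' \<noteq> {}" using dlm by auto
        have "T x' \<subseteq> T m'" using top' a(1) by blast
        then have "\<not> cross f (T x')" unfolding cross_ep using disj by blast
        moreover have "y' \<noteq> f" using a(2) disj by blast
        moreover have "x' \<noteq> m" using a(1) unfolding C'_def by blast
        ultimately show "\<not> cross f (T x') \<and> x' \<noteq> m \<and> y' \<noteq> f" by blast
      qed
      then have dl': "tri (\<lambda>y x. cross y (T x)) ((m, f) # dl)" using dl Rf by simp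
      have len': "card C \<le> length ((m, f) # dl) + length ul + 1" using len cardC by simp
      have "ep f \<inter> T m \<noteq> {}" using uw(2) unfolding uw(1) D_def by blast
      have dlm': "\<forall>(x,y)\<in>set ((m, f) # dl). x \<in> C \<and> y \<in> B2 - B1 \<and> ep y \<inter> T m \<noteq> {}"
      proof -
        have "\<forall>(x,y)\<in>set dl. x \<in> C \<and> y \<in> B2 - B1 \<and> ep y \<inter> T m \<noteq> {}" using dlm sub unfolding C'_def by blast
        moreover have "m \<in> C \<and> f \<in> B2 - B1 \<and> ep f \<inter> T m \<noteq> {}" using \<open>ep f \<inter> T m \<noteq> {}\<close> Suc.prems(4) f(1) fB1 by blast
        ultimately show ?thesis by simp
      qed
      have ulm': "\<forall>(x,y)\<in>set ul. x \<in> C - {m} \<and> y \<in> B2 - B1 \<and> ep y \<subseteq> T m"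
        using ulm sub unfolding C'_def by blast
      show ?thesis using dl' ul len' dlm' ulm' by blast
    qed
  qed
qed

lemma arith_bound: "1 \<le> (k::nat) \<Longrightarrow> (2 * k - 1) * k + 1 \<le> 3 * k ^ 3"
proof -
  assume k: "1 \<le> k"
  have a: "(2 * k - 1) * k + k = 2 * k * k"
  proof -
    have "(2 * k - 1) * k + k = (2 * k - 1 + 1) * k" by (simp add: add_mult_distrib)
    also have "2 * k - 1 + 1 = 2 * k" using k by simp
    finally show ?thesis .
  qed
  have b: "k * k \<le> k * k * k" using k by simp
  have "(2 * k - 1) * k + 1 \<le> 2 * k * k" using a k by linarith
  also have "\<dots> \<le> 2 * (k * k * k)" using b by simp
  also have "\<dots> \<le> 3 * k ^ 3" by (simp add: power3_eq_cube)
  finally show ?thesis .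
qed

lemma take_list:
  assumes "tri R ps" "k \<le> length ps" "\<forall>(x,y)\<in>set ps. x \<in> B1 - B2 \<and> y \<in> B2 - B1"
  shows "\<exists>ps. tri R ps \<and> length ps = k \<and> (\<forall>(x,y)\<in>set ps. x \<in> B1 - B2 \<and> y \<in> B2 - B1)"
proof (intro exI conjI)
  show "tri R (take k ps)" using tri_take[OF assms(1)] .
  show "length (take k ps) = k" using assms(2) by simp
  show "\<forall>(x,y)\<in>set (take k ps). x \<in> B1 - B2 \<and> y \<in> B2 - B1"
  proof (intro ballI)
    fix p assume "p \<in> set (take k ps)"
    then have p: "p \<in> set ps" using set_take_subset[of k ps] by blast
    show "case p of (x,y) \<Rightarrow> x \<in> B1 - B2 \<and> y \<in> B2 - B1" using assms(3) p by (cases p) auto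
  qed
qed

lemma exist_tri:
  assumes k: "k \<ge> 1" and c: "card (B1 - B2) \<ge> 3 * k ^ 3"
  shows "\<exists>ps. tri (\<lambda>y x. cross y (T x)) ps \<and> length ps = k \<and> (\<forall>(x,y)\<in>set ps. x \<in> B1 - B2 \<and> y \<in> B2 - B1)"
proof -
  define X where "X = B1 - B2"
  have fX: "finite X" unfolding X_def using finite_subset[OF B1E finE] by simp
  have inj: "inj_on T X" unfolding X_def using T_inj by (auto intro: inj_onI)
  have cF: "card (T ` X) = card X" using card_image[OF inj] .
  have "(2 * k - 1) * k + 1 \<le> card (T ` X)" using arith_bound[OF k] c cF unfolding X_def by linarith
  from mirsky[OF finite_imageI[OF fX] this]
  have "(\<exists>A\<subseteq>T ` X. k \<le> card A \<and> (\<forall>a\<in>A. \<forall>b\<in>A. a \<le> b \<longrightarrow> a = b)) \<or>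
        (\<exists>C\<subseteq>T ` X. card C = Suc (2 * k - 1) \<and> (\<forall>a\<in>C. \<forall>b\<in>C. a \<le> b \<or> b \<le> a))" .
  then show ?thesis
  proof
    assume "\<exists>A\<subseteq>T ` X. k \<le> card A \<and> (\<forall>a\<in>A. \<forall>b\<in>A. a \<le> b \<longrightarrow> a = b)"
    then obtain A' where A': "A' \<subseteq> T ` X" "k \<le> card A'" "\<forall>a\<in>A'. \<forall>b\<in>A'. a \<le> b \<longrightarrow> a = b" by blast
    define A where "A = {x\<in>X. T x \<in> A'}"
    have AX: "A \<subseteq> X" unfolding A_def by auto
    have TA: "T ` A = A'" unfolding A_def using A'(1) by auto
    have injA: "inj_on T A" using inj_on_subset[OF inj AX] .
    have cA: "card A = card A'" using card_image[OF injA] TA by simp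
    have fA: "finite A" using finite_subset[OF AX fX] .
    have disj: "\<forall>x\<in>A. \<forall>x'\<in>A. x \<noteq> x' \<longrightarrow> T x \<inter> T x' = {}"
    proof (intro ballI impI)
      fix x x' assume xx: "x \<in> A" "x' \<in> A" "x \<noteq> x'"
      have ne: "T x \<noteq> T x'"
      proof
        assume "T x = T x'"
        then have "x = x'" using inj_onD[OF injA] xx(1,2) by blast
        then show False using xx(3) by simp
      qed
      have "T x \<in> A'" "T x' \<in> A'" using xx unfolding A_def by auto
      then have "\<not> T x \<subseteq> T x'" "\<not> T x' \<subseteq> T x" using A'(3) ne by blast+
      moreover have "x \<in> B1" "x' \<in> B1" using xx AX unfolding X_def by auto
      ultimately show "T x \<inter> T x' = {}" using laminar[OF \<open>x \<in> B1\<close> \<open>x' \<in> B1\<close> xx(3)] by blast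
    qed
    from anti_list[OF fA AX[unfolded X_def] disj] obtain ps where
      ps: "tri (\<lambda>y x. cross y (T x)) ps" "length ps = card A"
      "\<forall>(x,y)\<in>set ps. x \<in> A \<and> y \<in> B2 - B1 \<and> ep y \<inter> \<Union>(T ` A) \<noteq> {}" by blast
    have "\<forall>(x,y)\<in>set ps. x \<in> B1 - B2 \<and> y \<in> B2 - B1"
    proof (intro ballI)
      fix p assume p: "p \<in> set ps"
      show "case p of (x,y) \<Rightarrow> x \<in> B1 - B2 \<and> y \<in> B2 - B1" using ps(3) p AX unfolding X_def by (cases p) auto
    qed
    then show ?thesis using take_list[OF ps(1)] ps(2) cA A'(2) by simp
  next
    assume "\<exists>C\<subseteq>T ` X. card C = Suc (2 * k - 1) \<and> (\<forall>a\<in>C. \<forall>b\<in>C. a \<le> b \<or> b \<le> a)"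
    then obtain C' where C': "C' \<subseteq> T ` X" "card C' = Suc (2 * k - 1)" "\<forall>a\<in>C'. \<forall>b\<in>C'. a \<le> b \<or> b \<le> a" by blast
    define C where "C = {x\<in>X. T x \<in> C'}"
    have CX: "C \<subseteq> X" unfolding C_def by auto
    have TC: "T ` C = C'" unfolding C_def using C'(1) by auto
    have injC: "inj_on T C" using inj_on_subset[OF inj CX] .
    have cC: "card C = card C'" using card_image[OF injC] TC by simp
    have fC: "finite C" using finite_subset[OF CX fX] .
    have fC': "finite C'" using finite_imageI[OF fC, of T] TC by simp
    have "C' \<noteq> {}" using C'(2) by auto
    from finite_has_maximal[OF fC' this] obtain M where M: "M \<in> C'" "\<forall>b\<in>C'. M \<le> b \<longrightarrow> M = b" by blast
    then obtain m where m: "m \<in> C" "T m = M" using TC by blast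
    have top: "\<forall>c\<in>C. T c \<subseteq> T m"
    proof
      fix c assume "c \<in> C"
      then have "T c \<in> C'" using TC by blast
      then show "T c \<subseteq> T m" using C'(3) M m(2) by blast
    qed
    have ch: "\<forall>x\<in>C. \<forall>x'\<in>C. T x \<subseteq> T x' \<or> T x' \<subseteq> T x" using C'(3) TC by blast
    from chain_list[OF fC CX[unfolded X_def] ch m(1) top] obtain dl ul where
      dl: "tri (\<lambda>y x. cross y (T x)) dl" and ul: "tri (\<lambda>y x. cross y (T x)) ul"
      and len: "card C \<le> length dl + length ul + 1"
      and dlm: "\<forall>(x,y)\<in>set dl. x \<in> C \<and> y \<in> B2 - B1 \<and> ep y \<inter> T m \<noteq> {}"
      and ulm: "\<forall>(x,y)\<in>set ul. x \<in> C - {m} \<and> y \<in> B2 - B1 \<and> ep y \<subseteq> T m" by blast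
    have "2 * k \<le> length dl + length ul + 1" using len cC C'(2) k by simp
    then have "k \<le> length dl \<or> k \<le> length ul" by linarith
    moreover have "\<forall>(x,y)\<in>set dl. x \<in> B1 - B2 \<and> y \<in> B2 - B1"
    proof (intro ballI)
      fix p assume p: "p \<in> set dl"
      show "case p of (x,y) \<Rightarrow> x \<in> B1 - B2 \<and> y \<in> B2 - B1" using dlm p CX unfolding X_def by (cases p) auto
    qed
    moreover have "\<forall>(x,y)\<in>set ul. x \<in> B1 - B2 \<and> y \<in> B2 - B1"
    proof (intro ballI)
      fix p assume p: "p \<in> set ul"
      show "case p of (x,y) \<Rightarrow> x \<in> B1 - B2 \<and> y \<in> B2 - B1" using ulm p CX unfolding X_def by (cases p) auto
    qed
    ultimately show ?thesis using take_list[OF dl] take_list[OF ul] by blast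
  qed
qed

lemma exchange:
  assumes k: "k \<ge> 1" and c: "card (B1 - B2) \<ge> 3 * k ^ 3"
  shows "elementary_exchange (graphic_base E ends) k B1 B2"
proof -
  obtain ps where ps: "tri (\<lambda>y x. cross y (T x)) ps" "length ps = k"
    "\<forall>(x,y)\<in>set ps. x \<in> B1 - B2 \<and> y \<in> B2 - B1" using exist_tri[OF k c] by blast
  have cong: "\<forall>x\<in>fst ` set ps. \<forall>y\<in>snd ` set ps. cross y (side B1 x) = cross y (T x)"
  proof (intro ballI)
    fix x y assume "x \<in> fst ` set ps" "y \<in> snd ` set ps"
    then have "x \<in> B1" "y \<in> E" using ps(3) B2E by auto
    then show "cross y (side B1 x) = cross y (T x)" using cross_T_side by simp
  qed
  have tr: "tri (\<lambda>y x. cross y (side B1 x)) ps" using tri_cong[OF cong] ps(1) by simp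
  have dist: "distinct (map fst ps)" "distinct (map snd ps)" using tri_distinct[OF ps(1)] by auto
  define \<phi> where "\<phi> x = the (map_of ps x)" for x
  have phi: "\<phi> x = y" if "(x,y) \<in> set ps" for x y
    unfolding \<phi>_def using map_of_is_SomeI[OF dist(1) that] by simp
  define X where "X = fst ` set ps"
  define Y where "Y = snd ` set ps"
  have cX: "card X = k" unfolding X_def using distinct_card[OF dist(1)] ps(2) by simp
  have cY: "card Y = k" unfolding Y_def using distinct_card[OF dist(2)] ps(2) by simp
  have XB: "X \<subseteq> B1 - B2" and YB: "Y \<subseteq> B2 - B1" unfolding X_def Y_def using ps(3) by auto
  have injs: "inj_on snd (set ps)" using dist(2) by (simp add: distinct_map)
  have bij: "bij_betw \<phi> X Y"
  proof (rule bij_betw_imageI)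
    show "inj_on \<phi> X"
    proof (rule inj_onI)
      fix a b assume ab: "a \<in> X" "b \<in> X" "\<phi> a = \<phi> b"
      obtain ya where ya: "(a, ya) \<in> set ps" using ab(1) unfolding X_def by force
      obtain yb where yb: "(b, yb) \<in> set ps" using ab(2) unfolding X_def by force
      have "ya = yb" using phi[OF ya] phi[OF yb] ab(3) by simp
      then have "(a, ya) = (b, yb)" using injs ya yb unfolding inj_on_def by fastforce
      then show "a = b" by simp
    qed
    show "\<phi> ` X = Y"
    proof
      show "\<phi> ` X \<subseteq> Y" unfolding X_def Y_def using phi by force
      show "Y \<subseteq> \<phi> ` X"
      proof
        fix y assume "y \<in> Y"
        then obtain x where "(x, y) \<in> set ps" unfolding Y_def by force
        then show "y \<in> \<phi> ` X" unfolding X_def using phi by force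
      qed
    qed
  qed
  have fin: "finite X" "finite Y" unfolding X_def Y_def by auto
  have all: "graphic_base E ends ((B1 - Z) \<union> \<phi> ` Z)" if "Z \<subseteq> X" for Z
  proof (rule tri_swap[OF b1 tr])
    show "\<forall>(x,y)\<in>set ps. x \<in> B1 \<and> y \<in> E \<and> y \<notin> B1 \<and> \<phi> x = y" using ps(3) phi B2E by auto
    show "Z \<subseteq> fst ` set ps" using that unfolding X_def .
  qed
  have allZ: "\<forall>Z\<subseteq>X. graphic_base E ends ((B1 - Z) \<union> \<phi> ` Z)" using all by blast
  have conj: "X \<subseteq> B1 - B2 \<and> Y \<subseteq> B2 - B1 \<and> card X = k \<and> card Y = k \<and> finite X \<and> finite Y \<and>
      bij_betw \<phi> X Y \<and> (\<forall>Z\<subseteq>X. graphic_base E ends ((B1 - Z) \<union> \<phi> ` Z))"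
    using XB YB cX cY fin bij allZ by (intro conjI)
  show ?thesis unfolding elementary_exchange_def
    by (intro exI[of _ X] exI[of _ Y] exI[of _ \<phi>]) (rule conj)
qed

end
end

theorem theorem5p24:
  fixes E :: "'e set" and ends :: "'e \<Rightarrow> 'v \<times> 'v" and k :: nat
  assumes "finite E" and "k \<ge> 1"
  shows "elem_weakly_base_orderable (graphic_base E ends) (3 * k ^ 3) k"
  unfolding elem_weakly_base_orderable_def
  using exchange[OF assms(1) _ _ assms(2)] by blast

end
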